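(* Let $\Omega\subset\mathbb{R}^n$ be a bounded domain for which the Poincaré inequality $\|v-v^\Omega\|\le C_P\|\nabla v\|$ holds for all $v\in H^1(\Omega)$, where $v^\Omega=|\Omega|^{-1}\int_\Omega v$. Let $D>0$, $L\in\mathbb{R}$, $\beta\ge0$, $T>0$, $K\in\mathbb N$, $\tau=T/K$. Let $u^0,\dots,u^K\in L^2(\Omega)$, $\theta^0\in L^2(\Omega)$, and let $\theta^1,\dots,\theta^K\in H^1(\Omega)$ satisfy $$(\theta^k-\theta^{k-1},\phi)+D\tau(\nabla\theta^k,\nabla\phi)-L(u^k-u^{k-1},\phi)=0\quad\forall\phi\in H^1(\Omega),\ k=1,\dots,K.$$ Then $$\tau\sum_{k=1}^K\|\nabla\theta^k\|^2\le D^{-1}\|\theta^0\|^2+D^{-2}L^2(\beta+C_P^2)\,\frac1\tau\sum_{k=1}^K\|u^k-u^{k-1}\|_{V_A'}^2.$$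
   Context: $(\cdot,\cdot)$ and $\|\cdot\|$ denote the $L^2(\Omega)$ inner product and norm. $V_A$ is $L^2(\Omega)$ if $\beta=0$ and $H^1(\Omega)$ if $\beta>0$, with norm $\|v\|_{V_A}^2=\beta\|\nabla v\|^2+\|v\|^2$; $\|\cdot\|_{V_A'}$ is the dual norm, $\|f\|_{V_A'}=\sup_{0\ne v\in V_A}(f,v)/\|v\|_{V_A}$ for $f\in L^2(\Omega)$. In terms of the interpolants of the paper, the left side is $\|\nabla\bar\theta_\tau\|_{L^2(Q)}^2$ and the last sum is $\|\partial_t\hat u_\tau\|^2_{L^2(0,T;V_A')}$. *)

theory Defs
  imports "HOL-Analysis.Analysis"
begin

coinductive smooth_fun :: "('a::euclidean_space \<Rightarrow> real) \<Rightarrow> bool" where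
  "\<lbrakk> \<forall>x. f differentiable (at x);
     \<forall>i\<in>Basis. smooth_fun (\<lambda>x. frechet_derivative f (at x) i) \<rbrakk> \<Longrightarrow> smooth_fun f"

definition test_fun :: "'a::euclidean_space set \<Rightarrow> ('a \<Rightarrow> real) \<Rightarrow> bool" where
  "test_fun \<Omega> \<phi> \<longleftrightarrow> smooth_fun \<phi> \<and> compact (closure {x. \<phi> x \<noteq> 0})
      \<and> closure {x. \<phi> x \<noteq> 0} \<subseteq> \<Omega>"

definition L2 :: "'a::euclidean_space set \<Rightarrow> ('a \<Rightarrow> real) \<Rightarrow> bool" where
  "L2 \<Omega> f \<longleftrightarrow> f \<in> borel_measurable (lebesgue_on \<Omega>)
      \<and> integrable (lebesgue_on \<Omega>) (\<lambda>x. (f x)\<^sup>2)"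

definition ip :: "'a::euclidean_space set \<Rightarrow> ('a \<Rightarrow> real) \<Rightarrow> ('a \<Rightarrow> real) \<Rightarrow> real" where
  "ip \<Omega> f g = (\<integral>x. f x * g x \<partial>lebesgue_on \<Omega>)"

definition nrm :: "'a::euclidean_space set \<Rightarrow> ('a \<Rightarrow> real) \<Rightarrow> real" where
  "nrm \<Omega> f = sqrt (\<integral>x. (f x)\<^sup>2 \<partial>lebesgue_on \<Omega>)"

definition ipv :: "'a::euclidean_space set \<Rightarrow> ('a \<Rightarrow> 'a) \<Rightarrow> ('a \<Rightarrow> 'a) \<Rightarrow> real" where
  "ipv \<Omega> f g = (\<integral>x. f x \<bullet> g x \<partial>lebesgue_on \<Omega>)"

definition nrmv :: "'a::euclidean_space set \<Rightarrow> ('a \<Rightarrow> 'a) \<Rightarrow> real" where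
  "nrmv \<Omega> g = sqrt (\<integral>x. (norm (g x))\<^sup>2 \<partial>lebesgue_on \<Omega>)"

definition weak_grad :: "'a::euclidean_space set \<Rightarrow> ('a \<Rightarrow> real) \<Rightarrow> ('a \<Rightarrow> 'a) \<Rightarrow> bool" where
  "weak_grad \<Omega> v g \<longleftrightarrow> (\<forall>\<phi>. test_fun \<Omega> \<phi> \<longrightarrow> (\<forall>i\<in>Basis.
      (\<integral>x. v x * frechet_derivative \<phi> (at x) i \<partial>lebesgue_on \<Omega>)
        = - (\<integral>x. (g x \<bullet> i) * \<phi> x \<partial>lebesgue_on \<Omega>)))"

definition H1 :: "'a::euclidean_space set \<Rightarrow> ('a \<Rightarrow> real) \<Rightarrow> ('a \<Rightarrow> 'a) \<Rightarrow> bool" where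
  "H1 \<Omega> v g \<longleftrightarrow> L2 \<Omega> v \<and> (\<forall>i\<in>Basis. L2 \<Omega> (\<lambda>x. g x \<bullet> i)) \<and> weak_grad \<Omega> v g"

definition mean :: "'a::euclidean_space set \<Rightarrow> ('a \<Rightarrow> real) \<Rightarrow> real" where
  "mean \<Omega> v = (\<integral>x. v x \<partial>lebesgue_on \<Omega>) / measure lebesgue \<Omega>"

(* dual norm on V_A' : V_A = L^2 if beta = 0, H^1 with norm beta|grad v|^2+|v|^2 if beta>0 *)
definition dual_norm :: "'a::euclidean_space set \<Rightarrow> real \<Rightarrow> ('a \<Rightarrow> real) \<Rightarrow> real" where
  "dual_norm \<Omega> \<beta> f =
     (if \<beta> = 0 then Sup {ip \<Omega> f v / nrm \<Omega> v | v. L2 \<Omega> v \<and> nrm \<Omega> v \<noteq> 0}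
      else Sup {ip \<Omega> f v / sqrt (\<beta> * (nrmv \<Omega> g)\<^sup>2 + (nrm \<Omega> v)\<^sup>2) | v g.
                  H1 \<Omega> v g \<and> sqrt (\<beta> * (nrmv \<Omega> g)\<^sup>2 + (nrm \<Omega> v)\<^sup>2) \<noteq> 0})"

end

theory Submission
  imports Defs
begin

lemma smooth_diff: "smooth_fun f \<Longrightarrow> f differentiable (at x)"
  by (erule smooth_fun.cases) auto

lemma smooth_partial: "smooth_fun f \<Longrightarrow> i \<in> Basis \<Longrightarrow> smooth_fun (\<lambda>x. frechet_derivative f (at x) i)"
  by (erule smooth_fun.cases) auto

lemma smooth_cont: "smooth_fun f \<Longrightarrow> continuous_on A f"
  by (meson continuous_at_imp_continuous_on differentiable_imp_continuous_within smooth_diff)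

lemma deriv_outside:
  fixes \<phi> :: "'a::euclidean_space \<Rightarrow> real"
  assumes "x \<notin> closure {x. \<phi> x \<noteq> 0}"
  shows "frechet_derivative \<phi> (at x) = (\<lambda>h. 0)"
proof -
  have "((\<lambda>_. 0::real) has_derivative (\<lambda>h. 0)) (at x)" by simp
  then have "(\<phi> has_derivative (\<lambda>h. 0)) (at x)"
    apply (rule has_derivative_transform_within_open[where s="- closure {x. \<phi> x \<noteq> 0}"])
    using assms apply auto
    by (metis (mono_tags, lifting) closure_subset mem_Collect_eq subsetD)
  then show ?thesis by (metis frechet_derivative_at)
qed

lemma line_deriv:
  fixes \<phi> :: "'a::euclidean_space \<Rightarrow> real"
  assumes "\<phi> differentiable (at (x + s *\<^sub>R i))"
  shows "((\<lambda>s. \<phi> (x + s *\<^sub>R i)) has_real_derivative frechet_derivative \<phi> (at (x + s *\<^sub>R i)) i) (at s)"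
proof -
  let ?D = "frechet_derivative \<phi> (at (x + s *\<^sub>R i))"
  have d: "(\<phi> has_derivative ?D) (at (x + s *\<^sub>R i))"
    using assms frechet_derivative_works by blast
  have l: "((\<lambda>s. x + s *\<^sub>R i) has_derivative (\<lambda>h. h *\<^sub>R i)) (at s)"
    by (auto intro!: derivative_eq_intros)
  have "((\<lambda>s. \<phi> (x + s *\<^sub>R i)) has_derivative (\<lambda>h. ?D (h *\<^sub>R i))) (at s)"
    using diff_chain_at[OF l d] by (simp add: o_def)
  moreover have "(\<lambda>h. ?D (h *\<^sub>R i)) = (\<lambda>h. ?D i * h)"
    using linear_cmul[OF has_derivative_linear[OF d]] by (auto simp: mult.commute)
  ultimately show ?thesis by (simp add: has_field_derivative_def)
qed

lemma partial_int_zero: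
  fixes \<phi> :: "'a::euclidean_space \<Rightarrow> real"
  assumes sm: "smooth_fun \<phi>" and cS: "compact (closure {x. \<phi> x \<noteq> 0})" and i: "i \<in> Basis"
  shows "(\<integral>x. frechet_derivative \<phi> (at x) i \<partial>lborel) = 0"
proof -
  define S where "S = closure {x. \<phi> x \<noteq> 0}"
  define \<psi> where "\<psi> = (\<lambda>x. frechet_derivative \<phi> (at x) i)"
  have cS: "compact S" using cS S_def by simp
  have zo: "x \<notin> S \<Longrightarrow> \<psi> x = 0" for x using deriv_outside[of x \<phi>] S_def \<psi>_def by simp
  have zo2: "x \<notin> S \<Longrightarrow> \<phi> x = 0" for x unfolding S_def
    by (metis (mono_tags, lifting) closure_subset mem_Collect_eq subsetD)
  have c\<psi>: "continuous_on A \<psi>" for A unfolding \<psi>_def by (rule smooth_cont[OF smooth_partial[OF sm i]])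
  have c\<phi>: "continuous_on A \<phi>" for A by (rule smooth_cont[OF sm])
  obtain B where B: "B > 0" "\<And>y. y \<in> \<psi> ` S \<Longrightarrow> norm y \<le> B"
    using compact_imp_bounded[OF compact_continuous_image[OF c\<psi> cS]] bounded_pos by metis
  have Bx: "\<bar>\<psi> x\<bar> \<le> B" for x using B zo[of x] by (cases "x \<in> S") auto
  obtain R where R: "R > 0" "\<And>x. x \<in> S \<Longrightarrow> norm x \<le> R"
    using compact_imp_bounded[OF cS] bounded_pos by metis
  have ni: "norm i = 1" using i by simp
  define t where "t n = inverse (real (Suc n))" for n
  have t0: "t n > 0" "t n \<le> 1" for n unfolding t_def by (auto simp: field_simps)
  define s where "s n x = (\<phi> (x + t n *\<^sub>R i) - \<phi> x) / t n" for n x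
  have \<phi>bor: "\<phi> \<in> borel_measurable borel" by (rule borel_measurable_continuous_onI[OF c\<phi>])
  have \<psi>bor: "\<psi> \<in> borel_measurable borel" by (rule borel_measurable_continuous_onI[OF c\<psi>])
  have \<phi>eq: "\<phi> = (\<lambda>x. indicator S x *\<^sub>R \<phi> x)" proof
    fix x show "\<phi> x = indicator S x *\<^sub>R \<phi> x" by (cases "x \<in> S") (auto simp: zo2)
  qed
  have int\<phi>: "integrable lborel \<phi>"
    by (subst \<phi>eq) (rule borel_integrable_compact[OF cS c\<phi>])
  have shift: "integrable lborel (\<lambda>x. \<phi> (x + c)) \<and> (\<integral>x. \<phi> (x + c) \<partial>lborel) = (\<integral>x. \<phi> x \<partial>lborel)" for c
  proof -
    have m: "(+) c \<in> measurable lborel borel" by simp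
    have "integrable (distr lborel borel ((+) c)) \<phi>" using int\<phi> lborel_distr_plus[of c] by simp
    then have "integrable lborel (\<lambda>x. \<phi> (c + x))" using integrable_distr_eq[OF m \<phi>bor] by simp
    moreover have "(\<integral>x. \<phi> (c + x) \<partial>lborel) = (\<integral>x. \<phi> x \<partial>lborel)"
      using integral_distr[OF m \<phi>bor] lborel_distr_plus[of c] by simp
    ultimately show ?thesis by (simp add: add.commute)
  qed
  have ints: "(\<integral>x. s n x \<partial>lborel) = 0" for n
  proof -
    have "(\<integral>x. s n x \<partial>lborel) = ((\<integral>x. \<phi> (x + t n *\<^sub>R i) \<partial>lborel) - (\<integral>x. \<phi> x \<partial>lborel)) / t n"
      unfolding s_def using shift[of "t n *\<^sub>R i"] int\<phi> by simp
    then show ?thesis using shift[of "t n *\<^sub>R i"] by simp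
  qed
  define w where "w x = B * indicator (cball 0 (R + 1)) x" for x :: 'a
  have intw: "integrable lborel w" unfolding w_def
    by (intro integrable_mult_right integrable_real_indicator) (use emeasure_bounded_finite[of "cball (0::'a) (R+1)"] in auto)
  have smeas: "s n \<in> borel_measurable lborel" for n
  proof -
    have "continuous_on UNIV (\<lambda>x. \<phi> (x + t n *\<^sub>R i))"
      by (rule continuous_on_compose2[OF c\<phi>]) (auto intro: continuous_intros)
    then have "continuous_on UNIV (s n)" unfolding s_def using t0(1)[of n] by (auto intro!: continuous_intros c\<phi>)
    then show ?thesis using borel_measurable_continuous_onI by simp
  qed
  have lim: "(\<lambda>n. s n x) \<longlonglongrightarrow> \<psi> x" for x
  proof -
    have "((\<lambda>h. \<phi> (x + h *\<^sub>R i)) has_real_derivative \<psi> x) (at 0)"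
      using line_deriv[of \<phi> x 0 i] smooth_diff[OF sm] \<psi>_def by simp
    then have d: "((\<lambda>h. (\<phi> (x + h *\<^sub>R i) - \<phi> x) / h) \<longlongrightarrow> \<psi> x) (at 0)"
      unfolding DERIV_def by simp
    have "filterlim t (at 0) sequentially"
      unfolding filterlim_at
    proof
      show "\<forall>\<^sub>F n in sequentially. t n \<in> UNIV \<and> t n \<noteq> 0"
        using t0(1) by (intro always_eventually) (metis UNIV_I less_irrefl)
      show "t \<longlonglongrightarrow> 0" unfolding t_def by (rule LIMSEQ_inverse_real_of_nat)
    qed
    from filterlim_compose[OF d this] show ?thesis unfolding s_def o_def by simp
  qed
  have bound: "norm (s n x) \<le> w x" for n x
  proof (cases "x \<in> cball 0 (R + 1)")
    case True
    have "\<exists>z. 0 < z \<and> z < t n \<and> \<phi> (x + t n *\<^sub>R i) - \<phi> (x + 0 *\<^sub>R i) = (t n - 0) * \<psi> (x + z *\<^sub>R i)"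
      by (rule MVT2[OF t0(1)]) (use line_deriv[OF smooth_diff[OF sm]] \<psi>_def in auto)
    then obtain z where z: "\<phi> (x + t n *\<^sub>R i) - \<phi> x = t n * \<psi> (x + z *\<^sub>R i)" by auto
    have "s n x = \<psi> (x + z *\<^sub>R i)" unfolding s_def z using t0[of n] by simp
    then show ?thesis using Bx True w_def by simp
  next
    case False
    then have nx: "norm x > R + 1" by simp
    have "norm (x + t n *\<^sub>R i) \<ge> norm x - norm (t n *\<^sub>R i)" by (rule norm_diff_ineq)
    moreover have "norm (t n *\<^sub>R i) \<le> 1" using t0[of n] ni by simp
    ultimately have "norm (x + t n *\<^sub>R i) > R" using nx by linarith
    then have "x + t n *\<^sub>R i \<notin> S" "x \<notin> S" using R(2)[of x] R(2)[of "x + t n *\<^sub>R i"] nx by linarith+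
    then show ?thesis using zo2 s_def w_def False B by simp
  qed
  have "(\<lambda>n. integral\<^sup>L lborel (s n)) \<longlonglongrightarrow> integral\<^sup>L lborel \<psi>"
    by (rule integral_dominated_convergence[where w=w]) (use \<psi>bor smeas intw lim bound in auto)
  then have "(\<lambda>n. 0::real) \<longlonglongrightarrow> integral\<^sup>L lborel \<psi>" using ints by simp
  then show ?thesis unfolding \<psi>_def using LIMSEQ_unique tendsto_const by metis
qed

lemma abs_prod_le: "\<bar>a * b\<bar> \<le> (a::real)\<^sup>2 + b\<^sup>2"
proof -
  have "2 * \<bar>a\<bar> * \<bar>b\<bar> \<le> \<bar>a\<bar>\<^sup>2 + \<bar>b\<bar>\<^sup>2" by (rule sum_squares_bound)
  then have h: "2 * (\<bar>a\<bar> * \<bar>b\<bar>) \<le> a\<^sup>2 + b\<^sup>2" by (simp add: mult.assoc)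
  moreover have "0 \<le> \<bar>a\<bar> * \<bar>b\<bar>" by simp
  ultimately show ?thesis unfolding abs_mult by linarith
qed

lemma L2_meas: "L2 \<Omega> f \<Longrightarrow> f \<in> borel_measurable (lebesgue_on \<Omega>)"
  by (simp add: L2_def)

lemma L2_sq: "L2 \<Omega> f \<Longrightarrow> integrable (lebesgue_on \<Omega>) (\<lambda>x. (f x)\<^sup>2)"
  by (simp add: L2_def)

lemma L2_prod:
  assumes "L2 \<Omega> f" "L2 \<Omega> g"
  shows "integrable (lebesgue_on \<Omega>) (\<lambda>x. f x * g x)"
proof (rule Bochner_Integration.integrable_bound[where f="\<lambda>x. (f x)\<^sup>2 + (g x)\<^sup>2"])
  show "integrable (lebesgue_on \<Omega>) (\<lambda>x. (f x)\<^sup>2 + (g x)\<^sup>2)"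
    using assms by (auto intro: integrable_add L2_sq)
  show "(\<lambda>x. f x * g x) \<in> borel_measurable (lebesgue_on \<Omega>)"
    using assms L2_meas by (auto intro: borel_measurable_times)
  show "AE x in lebesgue_on \<Omega>. norm (f x * g x) \<le> norm ((f x)\<^sup>2 + (g x)\<^sup>2)"
    using abs_prod_le by (auto intro!: always_eventually)
qed

lemma L2_const:
  assumes "\<Omega> \<in> lmeasurable" shows "L2 \<Omega> (\<lambda>x. c)"
  unfolding L2_def using finite_measure.integrable_const[OF finite_measure_lebesgue_on[OF assms]] by simp

lemma L2_int:
  assumes "\<Omega> \<in> lmeasurable" "L2 \<Omega> f" shows "integrable (lebesgue_on \<Omega>) f"
  using L2_prod[OF assms(2) L2_const[OF assms(1), of 1]] by simp

lemma L2_diff: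
  assumes "L2 \<Omega> f" "L2 \<Omega> g" shows "L2 \<Omega> (\<lambda>x. f x - g x)"
proof -
  have "(\<lambda>x. (f x - g x)\<^sup>2) = (\<lambda>x. (f x)\<^sup>2 - 2 * (f x * g x) + (g x)\<^sup>2)"
    by (auto simp: power2_diff)
  moreover have "integrable (lebesgue_on \<Omega>) (\<lambda>x. (f x)\<^sup>2 - 2 * (f x * g x) + (g x)\<^sup>2)"
    using assms L2_prod[OF assms] by (auto intro!: integrable_add integrable_diff integrable_mult_right L2_sq)
  ultimately show ?thesis unfolding L2_def using assms L2_meas by (auto intro!: borel_measurable_diff)
qed

lemma L2_minus:
  assumes "L2 \<Omega> f" shows "L2 \<Omega> (\<lambda>x. - f x)"
  using assms unfolding L2_def by auto

lemma nrm_zero_ip: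
  assumes "L2 \<Omega> v" "nrm \<Omega> v = 0" "L2 \<Omega> f"
  shows "ip \<Omega> f v = 0"
proof -
  have "(\<integral>x. (v x)\<^sup>2 \<partial>lebesgue_on \<Omega>) = 0" using assms(2) unfolding nrm_def
    using integral_nonneg_AE[of "\<lambda>x. (v x)\<^sup>2"] by simp
  then have "AE x in lebesgue_on \<Omega>. (v x)\<^sup>2 = 0"
    using integral_nonneg_eq_0_iff_AE[OF L2_sq[OF assms(1)]] by simp
  then have "AE x in lebesgue_on \<Omega>. f x * v x = 0" by eventually_elim simp
  then have "(\<integral>x. f x * v x \<partial>lebesgue_on \<Omega>) = (\<integral>x. 0 \<partial>lebesgue_on \<Omega>)"
    using assms L2_meas by (intro integral_cong_AE) (auto intro!: borel_measurable_times)
  then show ?thesis unfolding ip_def by simp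
qed

lemma nrm_sq: "(nrm \<Omega> v)\<^sup>2 = (\<integral>x. (v x)\<^sup>2 \<partial>lebesgue_on \<Omega>)"
  unfolding nrm_def by (simp add: integral_nonneg_AE)

lemma nrmv_sq: "(nrmv \<Omega> g)\<^sup>2 = (\<integral>x. (norm (g x))\<^sup>2 \<partial>lebesgue_on \<Omega>)"
  unfolding nrmv_def by (simp add: integral_nonneg_AE)

lemma ip_bound:
  assumes "L2 \<Omega> f" "L2 \<Omega> v"
  shows "\<bar>ip \<Omega> f v\<bar> \<le> nrm \<Omega> v * (((\<integral>x. (f x)\<^sup>2 \<partial>lebesgue_on \<Omega>) + 1) / 2)"
proof (cases "nrm \<Omega> v = 0")
  case True then show ?thesis using nrm_zero_ip[OF assms(2) True assms(1)] by simp
next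
  case False
  define n where "n = nrm \<Omega> v"
  have "0 \<le> (\<integral>x. (v x)\<^sup>2 \<partial>lebesgue_on \<Omega>)" by (rule integral_nonneg_AE) simp
  moreover have "(\<integral>x. (v x)\<^sup>2 \<partial>lebesgue_on \<Omega>) \<noteq> 0" using False by (auto simp: nrm_def)
  ultimately have "(\<integral>x. (v x)\<^sup>2 \<partial>lebesgue_on \<Omega>) > 0" by linarith
  then have n: "n > 0" using n_def by (simp add: nrm_def)
  have pw: "\<bar>f x * v x\<bar> \<le> (n * (f x)\<^sup>2 + (v x)\<^sup>2 / n) / 2" for x
  proof -
    have "2 * (sqrt n * \<bar>f x\<bar>) * (\<bar>v x\<bar> / sqrt n) \<le> (sqrt n * \<bar>f x\<bar>)\<^sup>2 + (\<bar>v x\<bar> / sqrt n)\<^sup>2"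
      by (rule sum_squares_bound)
    moreover have "(sqrt n * \<bar>f x\<bar>)\<^sup>2 = n * (f x)\<^sup>2" using n by (simp add: power_mult_distrib)
    moreover have "(\<bar>v x\<bar> / sqrt n)\<^sup>2 = (v x)\<^sup>2 / n" using n by (simp add: power_divide)
    moreover have "2 * (sqrt n * \<bar>f x\<bar>) * (\<bar>v x\<bar> / sqrt n) = 2 * \<bar>f x * v x\<bar>"
      using n by (simp add: abs_mult)
    ultimately show ?thesis by simp
  qed
  have "\<bar>ip \<Omega> f v\<bar> \<le> (\<integral>x. \<bar>f x * v x\<bar> \<partial>lebesgue_on \<Omega>)"
    unfolding ip_def using integral_abs_bound by blast
  also have "\<dots> \<le> (\<integral>x. (n * (f x)\<^sup>2 + (v x)\<^sup>2 / n) / 2 \<partial>lebesgue_on \<Omega>)"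
    using pw L2_prod[OF assms] L2_sq[OF assms(1)] L2_sq[OF assms(2)]
    by (intro integral_mono) (auto intro!: integrable_add integrable_mult_right integrable_divide)
  also have "\<dots> = (n * (\<integral>x. (f x)\<^sup>2 \<partial>lebesgue_on \<Omega>) + (\<integral>x. (v x)\<^sup>2 \<partial>lebesgue_on \<Omega>) / n) / 2"
    using L2_sq[OF assms(1)] L2_sq[OF assms(2)] by (simp add: integral_add integral_mult_right)
  also have "(\<integral>x. (v x)\<^sup>2 \<partial>lebesgue_on \<Omega>) = n\<^sup>2" using nrm_sq[of \<Omega> v] n_def by simp
  also have "(n * (\<integral>x. (f x)\<^sup>2 \<partial>lebesgue_on \<Omega>) + n\<^sup>2 / n) / 2 = n * (((\<integral>x. (f x)\<^sup>2 \<partial>lebesgue_on \<Omega>) + 1) / 2)"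
    using n by (simp add: power2_eq_square field_simps)
  finally show ?thesis using n_def by simp
qed

lemma test_partial:
  fixes \<phi> :: "'a::euclidean_space \<Rightarrow> real"
  assumes \<Omega>m: "\<Omega> \<in> lmeasurable" and tf: "test_fun \<Omega> \<phi>" and i: "i \<in> Basis"
  shows "L2 \<Omega> (\<lambda>x. frechet_derivative \<phi> (at x) i)"
    and "(\<integral>x. frechet_derivative \<phi> (at x) i \<partial>lebesgue_on \<Omega>) = 0"
proof -
  define S where "S = closure {x. \<phi> x \<noteq> 0}"
  define \<psi> where "\<psi> = (\<lambda>x. frechet_derivative \<phi> (at x) i)"
  have sm: "smooth_fun \<phi>" and cS: "compact S" and S\<Omega>: "S \<subseteq> \<Omega>"
    using tf unfolding test_fun_def S_def by auto
  have zo: "x \<notin> S \<Longrightarrow> \<psi> x = 0" for x using deriv_outside[of x \<phi>] S_def \<psi>_def by simp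
  have c\<psi>: "continuous_on A \<psi>" for A unfolding \<psi>_def by (rule smooth_cont[OF smooth_partial[OF sm i]])
  obtain B where B: "B > 0" "\<And>y. y \<in> \<psi> ` S \<Longrightarrow> norm y \<le> B"
    using compact_imp_bounded[OF compact_continuous_image[OF c\<psi> cS]] bounded_pos by metis
  have Bx: "\<bar>\<psi> x\<bar> \<le> B" for x using B zo[of x] by (cases "x \<in> S") auto
  have \<Omega>s: "\<Omega> \<in> sets lebesgue" using \<Omega>m by (simp add: fmeasurableD)
  have meas: "\<psi> \<in> borel_measurable (lebesgue_on \<Omega>)"
    by (rule continuous_imp_measurable_on_sets_lebesgue[OF c\<psi> \<Omega>s])
  have "integrable (lebesgue_on \<Omega>) (\<lambda>x. (\<psi> x)\<^sup>2)"
  proof (rule Bochner_Integration.integrable_bound[where f="\<lambda>x. B\<^sup>2"])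
    show "integrable (lebesgue_on \<Omega>) (\<lambda>x. B\<^sup>2)"
      using L2_sq[OF L2_const[OF \<Omega>m, of B]] by simp
    show "(\<lambda>x. (\<psi> x)\<^sup>2) \<in> borel_measurable (lebesgue_on \<Omega>)" using meas by simp
    show "AE x in lebesgue_on \<Omega>. norm ((\<psi> x)\<^sup>2) \<le> norm (B\<^sup>2)"
    proof (intro always_eventually allI)
      fix x
      have "\<bar>\<psi> x\<bar>\<^sup>2 \<le> B\<^sup>2" using Bx[of x] by (intro power_mono) auto
      then show "norm ((\<psi> x)\<^sup>2) \<le> norm (B\<^sup>2)" by simp
    qed
  qed
  then show "L2 \<Omega> (\<lambda>x. frechet_derivative \<phi> (at x) i)" using meas unfolding L2_def \<psi>_def by simp
  have bor: "\<psi> \<in> borel_measurable lborel"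
    using borel_measurable_continuous_onI[OF c\<psi>] by simp
  have "(\<integral>x. \<psi> x \<partial>lebesgue_on \<Omega>) = (\<integral>x. (if x \<in> \<Omega> then \<psi> x else 0) \<partial>lebesgue)"
    by (rule Lebesgue_Measure.integral_restrict_UNIV[OF \<Omega>s, symmetric])
  also have "(\<lambda>x. if x \<in> \<Omega> then \<psi> x else 0) = \<psi>" using zo S\<Omega> by (intro ext) auto
  also have "(\<integral>x. \<psi> x \<partial>lebesgue) = (\<integral>x. \<psi> x \<partial>lborel)"
    by (rule integral_completion[OF bor])
  also have "\<dots> = 0" unfolding \<psi>_def by (rule partial_int_zero[OF sm _ i]) (use cS S_def in simp)
  finally show "(\<integral>x. frechet_derivative \<phi> (at x) i \<partial>lebesgue_on \<Omega>) = 0" unfolding \<psi>_def by simp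
qed

lemma H1_shift:
  assumes \<Omega>m: "\<Omega> \<in> lmeasurable" and h: "H1 \<Omega> v g"
  shows "H1 \<Omega> (\<lambda>x. v x - c) g"
proof -
  have Lv: "L2 \<Omega> v" using h by (simp add: H1_def)
  have "weak_grad \<Omega> (\<lambda>x. v x - c) g" unfolding weak_grad_def
  proof (intro allI impI ballI)
    fix \<phi> :: "'a \<Rightarrow> real" and i :: 'a
    assume tf: "test_fun \<Omega> \<phi>" and i: "i \<in> Basis"
    note tp = test_partial[OF \<Omega>m tf i]
    have "(\<integral>x. (v x - c) * frechet_derivative \<phi> (at x) i \<partial>lebesgue_on \<Omega>)
       = (\<integral>x. v x * frechet_derivative \<phi> (at x) i - c * frechet_derivative \<phi> (at x) i \<partial>lebesgue_on \<Omega>)"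
      by (simp add: algebra_simps)
    also have "\<dots> = (\<integral>x. v x * frechet_derivative \<phi> (at x) i \<partial>lebesgue_on \<Omega>)
        - c * (\<integral>x. frechet_derivative \<phi> (at x) i \<partial>lebesgue_on \<Omega>)"
      using L2_prod[OF Lv tp(1)] L2_int[OF \<Omega>m tp(1)] by simp
    also have "\<dots> = - (\<integral>x. (g x \<bullet> i) * \<phi> x \<partial>lebesgue_on \<Omega>)"
      using tp(2) h tf i unfolding H1_def weak_grad_def by simp
    finally show "(\<integral>x. (v x - c) * frechet_derivative \<phi> (at x) i \<partial>lebesgue_on \<Omega>) =
         - (\<integral>x. (g x \<bullet> i) * \<phi> x \<partial>lebesgue_on \<Omega>)" .
  qed
  then show ?thesis using h L2_diff[OF Lv L2_const[OF \<Omega>m]] unfolding H1_def by simp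
qed

lemma H1_const:
  assumes \<Omega>m: "\<Omega> \<in> lmeasurable"
  shows "H1 \<Omega> (\<lambda>x. c) (\<lambda>x. 0)"
proof -
  have "weak_grad \<Omega> (\<lambda>x. c) (\<lambda>x. 0)" unfolding weak_grad_def
  proof (intro allI impI ballI)
    fix \<phi> :: "'a \<Rightarrow> real" and i :: 'a
    assume tf: "test_fun \<Omega> \<phi>" and i: "i \<in> Basis"
    show "(\<integral>x. c * frechet_derivative \<phi> (at x) i \<partial>lebesgue_on \<Omega>) = - (\<integral>x. (0 \<bullet> i) * \<phi> x \<partial>lebesgue_on \<Omega>)"
      using test_partial(2)[OF \<Omega>m tf i] by simp
  qed
  then show ?thesis using L2_const[OF \<Omega>m] unfolding H1_def by simp
qed

lemma H1_minus:
  assumes h: "H1 \<Omega> v g"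
  shows "H1 \<Omega> (\<lambda>x. - v x) (\<lambda>x. - g x)"
proof -
  have "weak_grad \<Omega> (\<lambda>x. - v x) (\<lambda>x. - g x)" unfolding weak_grad_def
  proof (intro allI impI ballI)
    fix \<phi> :: "'a \<Rightarrow> real" and i :: 'a
    assume tf: "test_fun \<Omega> \<phi>" and i: "i \<in> Basis"
    have "(\<integral>x. v x * frechet_derivative \<phi> (at x) i \<partial>lebesgue_on \<Omega>) = - (\<integral>x. (g x \<bullet> i) * \<phi> x \<partial>lebesgue_on \<Omega>)"
      using h tf i unfolding H1_def weak_grad_def by simp
    then show "(\<integral>x. - v x * frechet_derivative \<phi> (at x) i \<partial>lebesgue_on \<Omega>) = - (\<integral>x. (- g x \<bullet> i) * \<phi> x \<partial>lebesgue_on \<Omega>)"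
      by simp
  qed
  moreover have "\<forall>i\<in>Basis. L2 \<Omega> (\<lambda>x. - g x \<bullet> i)" using h L2_minus unfolding H1_def by fastforce
  ultimately show ?thesis using h L2_minus[of \<Omega> v] unfolding H1_def by simp
qed

lemma nrm_nonneg: "nrm \<Omega> v \<ge> 0" by (simp add: nrm_def integral_nonneg_AE)
lemma nrmv_nonneg: "nrmv \<Omega> v \<ge> 0" by (simp add: nrmv_def integral_nonneg_AE)

lemma ip_minus: "ip \<Omega> f (\<lambda>x. - v x) = - ip \<Omega> f v" by (simp add: ip_def)
lemma nrm_minus: "nrm \<Omega> (\<lambda>x. - v x) = nrm \<Omega> v" by (simp add: nrm_def)
lemma nrmv_minus: "nrmv \<Omega> (\<lambda>x. - v x) = nrmv \<Omega> v" by (simp add: nrmv_def)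

lemma elem_bound:
  assumes "L2 \<Omega> f" "L2 \<Omega> v" "nrm \<Omega> v \<le> d" "d > 0"
  shows "ip \<Omega> f v / d \<le> ((\<integral>x. (f x)\<^sup>2 \<partial>lebesgue_on \<Omega>) + 1) / 2"
proof -
  define C where "C = ((\<integral>x. (f x)\<^sup>2 \<partial>lebesgue_on \<Omega>) + 1) / 2"
  have C0: "C \<ge> 0" unfolding C_def using integral_nonneg_AE[of "\<lambda>x. (f x)\<^sup>2" "lebesgue_on \<Omega>"] by simp
  have "\<bar>ip \<Omega> f v\<bar> \<le> nrm \<Omega> v * C" using ip_bound[OF assms(1,2)] unfolding C_def .
  then have "ip \<Omega> f v \<le> nrm \<Omega> v * C" by linarith
  also have "\<dots> \<le> d * C" using assms(3) C0 by (simp add: mult_right_mono)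
  finally show ?thesis using assms(4) C_def by (simp add: divide_le_eq mult.commute)
qed

lemma dual_bound:
  assumes \<Omega>m: "\<Omega> \<in> lmeasurable" and beta: "\<beta> \<ge> 0" and Lf: "L2 \<Omega> f" and h: "H1 \<Omega> w g"
  shows "\<bar>ip \<Omega> f w\<bar> \<le> dual_norm \<Omega> \<beta> f * sqrt (\<beta> * (nrmv \<Omega> g)\<^sup>2 + (nrm \<Omega> w)\<^sup>2)"
proof -
  define N where "N = sqrt (\<beta> * (nrmv \<Omega> g)\<^sup>2 + (nrm \<Omega> w)\<^sup>2)"
  have Lw: "L2 \<Omega> w" using h by (simp add: H1_def)
  have hm: "H1 \<Omega> (\<lambda>x. - w x) (\<lambda>x. - g x)" by (rule H1_minus[OF h])
  have Lwm: "L2 \<Omega> (\<lambda>x. - w x)" by (rule L2_minus[OF Lw])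
  have nw: "nrm \<Omega> w \<le> N"
    unfolding N_def using beta by (intro real_le_rsqrt) (auto intro: nrm_nonneg)
  define C where "C = ((\<integral>x. (f x)\<^sup>2 \<partial>lebesgue_on \<Omega>) + 1) / 2"
  show ?thesis
  proof (cases "N = 0")
    case True
    then have "nrm \<Omega> w = 0" using nw nrm_nonneg[of \<Omega> w] by linarith
    then have ip0: "ip \<Omega> f w = 0" using nrm_zero_ip[OF Lw _ Lf] by simp
    have sq0: "sqrt (\<beta> * (nrmv \<Omega> g)\<^sup>2 + (nrm \<Omega> w)\<^sup>2) = 0" using True N_def by simp
    show ?thesis by (simp only: sq0 ip0 abs_zero mult_zero_right order_refl)
  next
    case False
    then have N0: "N > 0" using N_def real_sqrt_ge_zero[of "\<beta> * (nrmv \<Omega> g)\<^sup>2 + (nrm \<Omega> w)\<^sup>2"] beta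
      by (simp add: less_le)
    have key: "ip \<Omega> f w / N \<le> dual_norm \<Omega> \<beta> f \<and> ip \<Omega> f (\<lambda>x. - w x) / N \<le> dual_norm \<Omega> \<beta> f"
    proof (cases "\<beta> = 0")
      case True
      define A where "A = {ip \<Omega> f v / nrm \<Omega> v | v. L2 \<Omega> v \<and> nrm \<Omega> v \<noteq> 0}"
      have NN: "N = nrm \<Omega> w" using True N_def nrm_nonneg[of \<Omega> w] by simp
      have bdd: "bdd_above A" unfolding A_def
      proof (rule bdd_aboveI[of _ C], clarify)
        fix v assume "L2 \<Omega> v" "nrm \<Omega> v \<noteq> 0"
        then show "ip \<Omega> f v / nrm \<Omega> v \<le> C" unfolding C_def
          using nrm_nonneg[of \<Omega> v] by (intro elem_bound[OF Lf]) auto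
      qed
      have nz: "nrm \<Omega> w \<noteq> 0" using NN N0 by simp
      have m1: "ip \<Omega> f w / N \<in> A" unfolding A_def NN using Lw nz by (intro CollectI exI conjI) (rule refl)
      have m2: "ip \<Omega> f (\<lambda>x. - w x) / N \<in> A" unfolding A_def NN
        using Lwm nz nrm_minus[of \<Omega> w] by (intro CollectI exI[of _ "\<lambda>x. - w x"] conjI) auto
      have "dual_norm \<Omega> \<beta> f = Sup A" unfolding dual_norm_def A_def using True by simp
      then show ?thesis using cSup_upper[OF m1 bdd] cSup_upper[OF m2 bdd] by simp
    next
      case bF: False
      define A where "A = {ip \<Omega> f v / sqrt (\<beta> * (nrmv \<Omega> g)\<^sup>2 + (nrm \<Omega> v)\<^sup>2) | v g.
                  H1 \<Omega> v g \<and> sqrt (\<beta> * (nrmv \<Omega> g)\<^sup>2 + (nrm \<Omega> v)\<^sup>2) \<noteq> 0}"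
      have bdd: "bdd_above A" unfolding A_def
      proof (rule bdd_aboveI[of _ C], clarify)
        fix v g' assume H: "H1 \<Omega> v g'" and nz: "sqrt (\<beta> * (nrmv \<Omega> g')\<^sup>2 + (nrm \<Omega> v)\<^sup>2) \<noteq> 0"
        define d where "d = sqrt (\<beta> * (nrmv \<Omega> g')\<^sup>2 + (nrm \<Omega> v)\<^sup>2)"
        have le: "nrm \<Omega> v \<le> d" unfolding d_def
          by (rule real_le_rsqrt) (use beta in simp)
        have "0 \<le> d" unfolding d_def using beta by simp
        then have pos: "d > 0" using nz d_def by simp
        have Lv: "L2 \<Omega> v" using H by (simp add: H1_def)
        show "ip \<Omega> f v / sqrt (\<beta> * (nrmv \<Omega> g')\<^sup>2 + (nrm \<Omega> v)\<^sup>2) \<le> C"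
          unfolding C_def d_def[symmetric] by (rule elem_bound[OF Lf Lv le pos])
      qed
      have nz: "sqrt (\<beta> * (nrmv \<Omega> g)\<^sup>2 + (nrm \<Omega> w)\<^sup>2) \<noteq> 0" using N0 N_def by simp
      have m1: "ip \<Omega> f w / N \<in> A" unfolding A_def N_def
      proof (intro CollectI exI conjI)
        show "ip \<Omega> f w / sqrt (\<beta> * (nrmv \<Omega> g)\<^sup>2 + (nrm \<Omega> w)\<^sup>2) =
          ip \<Omega> f w / sqrt (\<beta> * (nrmv \<Omega> g)\<^sup>2 + (nrm \<Omega> w)\<^sup>2)" by (rule refl)
      qed (use h nz in auto)
      have m2: "ip \<Omega> f (\<lambda>x. - w x) / N \<in> A" unfolding A_def N_def
      proof (intro CollectI exI conjI)
        show "ip \<Omega> f (\<lambda>x. - w x) / sqrt (\<beta> * (nrmv \<Omega> g)\<^sup>2 + (nrm \<Omega> w)\<^sup>2) =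
          ip \<Omega> f (\<lambda>x. - w x) / sqrt (\<beta> * (nrmv \<Omega> (\<lambda>x. - g x))\<^sup>2 + (nrm \<Omega> (\<lambda>x. - w x))\<^sup>2)"
          by (simp only: nrm_minus nrmv_minus)
        show "H1 \<Omega> (\<lambda>x. - w x) (\<lambda>x. - g x)" by (rule hm)
        show "sqrt (\<beta> * (nrmv \<Omega> (\<lambda>x. - g x))\<^sup>2 + (nrm \<Omega> (\<lambda>x. - w x))\<^sup>2) \<noteq> 0"
          using nz by (simp only: nrm_minus nrmv_minus not_False_eq_True)
      qed
      have "dual_norm \<Omega> \<beta> f = Sup A" unfolding dual_norm_def A_def using bF by simp
      then show ?thesis using cSup_upper[OF m1 bdd] cSup_upper[OF m2 bdd] by simp
    qed
    then have k1: "ip \<Omega> f w / N \<le> dual_norm \<Omega> \<beta> f" and k2: "(- ip \<Omega> f w) / N \<le> dual_norm \<Omega> \<beta> f"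
      by (auto simp: ip_minus)
    have "ip \<Omega> f w \<le> dual_norm \<Omega> \<beta> f * N" "- ip \<Omega> f w \<le> dual_norm \<Omega> \<beta> f * N"
      using pos_divide_le_eq[OF N0, of "ip \<Omega> f w"] pos_divide_le_eq[OF N0, of "- ip \<Omega> f w"] k1 k2
      by (simp only:)+
    then show ?thesis unfolding N_def by (simp add: abs_le_iff)
  qed
qed

lemma young: assumes "(e::real) > 0" shows "a * x \<le> e * x\<^sup>2 / 2 + a\<^sup>2 / (2 * e)"
proof -
  have "e * x\<^sup>2 / 2 + a\<^sup>2 / (2 * e) - a * x = (e * x - a)\<^sup>2 / (2 * e)"
    using assms by (simp add: field_simps power2_eq_square)
  moreover have "(e * x - a)\<^sup>2 / (2 * e) \<ge> 0" using assms by simp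
  ultimately show ?thesis by linarith
qed

lemma telescope: fixes n :: nat and f :: "nat \<Rightarrow> real" shows "(\<Sum>k = 1..n. (f (k - 1) - f k)) = f 0 - f n"
  by (induction n) (auto simp: sum.atLeast1_atMost_eq)

lemma ip_shift:
  assumes \<Omega>m: "\<Omega> \<in> lmeasurable" and "L2 \<Omega> f" "L2 \<Omega> v"
  shows "ip \<Omega> f v = ip \<Omega> f (\<lambda>x. v x - c) + c * (\<integral>x. f x \<partial>lebesgue_on \<Omega>)"
proof -
  have "ip \<Omega> f v = (\<integral>x. f x * (v x - c) + c * f x \<partial>lebesgue_on \<Omega>)"
    unfolding ip_def by (simp add: algebra_simps)
  also have "\<dots> = ip \<Omega> f (\<lambda>x. v x - c) + c * (\<integral>x. f x \<partial>lebesgue_on \<Omega>)"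
    unfolding ip_def using L2_prod[OF assms(2) L2_diff[OF assms(3) L2_const[OF \<Omega>m]]] L2_int[OF \<Omega>m assms(2)]
    by simp
  finally show ?thesis .
qed

theorem mainTheorem5:
  fixes \<Omega> :: "'a::euclidean_space set"
    and C\<^sub>P D L \<beta> T \<tau> :: real and K :: nat
    and u \<theta> :: "nat \<Rightarrow> 'a \<Rightarrow> real" and g\<theta> :: "nat \<Rightarrow> 'a \<Rightarrow> 'a"
  assumes dom: "open \<Omega>" "connected \<Omega>" "bounded \<Omega>" "\<Omega> \<noteq> {}"
    and poincare: "\<And>v g. H1 \<Omega> v g \<Longrightarrow> nrm \<Omega> (\<lambda>x. v x - mean \<Omega> v) \<le> C\<^sub>P * nrmv \<Omega> g"
    and D: "D > 0" and beta: "\<beta> \<ge> 0" and T: "T > 0" and K: "K > 0"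
    and tau: "\<tau> = T / real K"
    and u: "\<And>k. k \<le> K \<Longrightarrow> L2 \<Omega> (u k)"
    and theta0: "L2 \<Omega> (\<theta> 0)"
    and theta: "\<And>k. 1 \<le> k \<Longrightarrow> k \<le> K \<Longrightarrow> H1 \<Omega> (\<theta> k) (g\<theta> k)"
    and scheme: "\<And>k \<phi> g\<phi>. 1 \<le> k \<Longrightarrow> k \<le> K \<Longrightarrow> H1 \<Omega> \<phi> g\<phi> \<Longrightarrow>
        ip \<Omega> (\<lambda>x. \<theta> k x - \<theta> (k - 1) x) \<phi> + D * \<tau> * ipv \<Omega> (g\<theta> k) g\<phi>
          - L * ip \<Omega> (\<lambda>x. u k x - u (k - 1) x) \<phi> = 0"
  shows "\<tau> * (\<Sum>k = 1..K. (nrmv \<Omega> (g\<theta> k))\<^sup>2)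
     \<le> (nrm \<Omega> (\<theta> 0))\<^sup>2 / D
        + L\<^sup>2 * (\<beta> + C\<^sub>P\<^sup>2) / D\<^sup>2 * (1 / \<tau>)
          * (\<Sum>k = 1..K. (dual_norm \<Omega> \<beta> (\<lambda>x. u k x - u (k - 1) x))\<^sup>2)"
proof -
  let ?M = "lebesgue_on \<Omega>"
  have \<Omega>m: "\<Omega> \<in> lmeasurable" using dom by (simp add: lmeasurable_open)
  have \<Omega>s: "\<Omega> \<in> sets lebesgue" using \<Omega>m by (simp add: fmeasurableD)
  define V where "V = measure lebesgue \<Omega>"
  have V0: "V > 0"
  proof -
    obtain x where x: "x \<in> \<Omega>" using dom(4) by blast
    obtain e where e: "e > 0" "ball x e \<subseteq> \<Omega>" using dom(1) x open_contains_ball by blast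
    have "0 < measure lborel (ball x e)" by (rule content_ball_pos[OF e(1)])
    also have "measure lborel (ball x e) = measure lebesgue (ball x e)" by simp
    also have "\<dots> \<le> V" unfolding V_def
      by (rule measure_mono_fmeasurable[OF e(2)]) (use \<Omega>m in auto)
    finally show ?thesis .
  qed
  have m\<Omega>: "measure ?M \<Omega> = V"
    unfolding V_def by (rule measure_restrict_space) (use \<Omega>s in auto)
  have intc: "(\<integral>x. c \<partial>?M) = V * c" for c :: real
    using m\<Omega> by simp
  have tau0: "\<tau> > 0" using tau T K by simp
  have Dt: "D * \<tau> > 0" using D tau0 by simp
  define c where "c = \<beta> + C\<^sub>P\<^sup>2"
  have c0: "c \<ge> 0" using beta c_def by simp
  define m where "m k = mean \<Omega> (\<theta> k)" for k
  define w where "w k x = \<theta> k x - m k" for k x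
  define G where "G k = nrmv \<Omega> (g\<theta> k)" for k
  define dn where "dn k = dual_norm \<Omega> \<beta> (\<lambda>x. u k x - u (k - 1) x)" for k
  define E where "E k = (\<integral>x. (w k x)\<^sup>2 \<partial>?M)" for k
  have L\<theta>: "L2 \<Omega> (\<theta> k)" if "k \<le> K" for k
    using theta0 theta[of k] that by (cases "k = 0") (auto simp: H1_def)
  have Lw: "L2 \<Omega> (w k)" if "k \<le> K" for k
    unfolding w_def by (rule L2_diff[OF L\<theta>[OF that] L2_const[OF \<Omega>m]])
  have int\<theta>: "(\<integral>x. \<theta> k x \<partial>?M) = V * m k" for k
    unfolding m_def mean_def V_def using V0 V_def by simp
  have intw: "(\<integral>x. w k x \<partial>?M) = 0" if "k \<le> K" for k
  proof -
    have "(\<integral>x. w k x \<partial>?M) = (\<integral>x. \<theta> k x \<partial>?M) - (\<integral>x. m k \<partial>?M)"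
      unfolding w_def using L2_int[OF \<Omega>m L\<theta>[OF that]] L2_int[OF \<Omega>m L2_const[OF \<Omega>m]] by simp
    then show ?thesis using int\<theta>[of k] m\<Omega> by simp
  qed
  have E0: "E 0 \<le> (nrm \<Omega> (\<theta> 0))\<^sup>2"
  proof -
    have "E 0 = (\<integral>x. (\<theta> 0 x)\<^sup>2 - (2 * m 0) * \<theta> 0 x + (m 0)\<^sup>2 \<partial>?M)"
      unfolding E_def w_def by (rule Bochner_Integration.integral_cong) (simp_all add: power2_diff algebra_simps)
    also have "\<dots> = (\<integral>x. (\<theta> 0 x)\<^sup>2 \<partial>?M) - (2 * m 0) * (\<integral>x. \<theta> 0 x \<partial>?M) + (\<integral>x. (m 0)\<^sup>2 \<partial>?M)"
      using L2_sq[OF theta0] L2_int[OF \<Omega>m theta0] L2_int[OF \<Omega>m L2_const[OF \<Omega>m]] by simp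
    also have "\<dots> = (\<integral>x. (\<theta> 0 x)\<^sup>2 \<partial>?M) - V * (m 0)\<^sup>2"
      using int\<theta>[of 0] m\<Omega> by (simp add: power2_eq_square)
    also have "\<dots> \<le> (\<integral>x. (\<theta> 0 x)\<^sup>2 \<partial>?M)" using V0 by simp
    finally show ?thesis by (simp add: nrm_sq)
  qed
  have EK: "E K \<ge> 0" unfolding E_def by (rule integral_nonneg_AE) simp
  have step: "D * \<tau> / 2 * (G k)\<^sup>2 \<le> L\<^sup>2 * c / (2 * (D * \<tau>)) * (dn k)\<^sup>2 + (E (k - 1) - E k) / 2"
    if k1: "1 \<le> k" and kK: "k \<le> K" for k
  proof -
    have kK': "k - 1 \<le> K" using kK by simp
    have H\<theta>: "H1 \<Omega> (\<theta> k) (g\<theta> k)" by (rule theta[OF k1 kK])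
    have L\<delta>\<theta>: "L2 \<Omega> (\<lambda>x. \<theta> k x - \<theta> (k - 1) x)" by (rule L2_diff[OF L\<theta>[OF kK] L\<theta>[OF kK']])
    have L\<delta>u: "L2 \<Omega> (\<lambda>x. u k x - u (k - 1) x)" by (rule L2_diff[OF u[OF kK] u[OF kK']])
    define I\<theta> where "I\<theta> = (\<integral>x. \<theta> k x - \<theta> (k - 1) x \<partial>?M)"
    define Iu where "Iu = (\<integral>x. u k x - u (k - 1) x \<partial>?M)"
    define P\<theta> where "P\<theta> = ip \<Omega> (\<lambda>x. \<theta> k x - \<theta> (k - 1) x) (w k)"
    define Pu where "Pu = ip \<Omega> (\<lambda>x. u k x - u (k - 1) x) (w k)"
    have s1: "ip \<Omega> (\<lambda>x. \<theta> k x - \<theta> (k - 1) x) (\<theta> k) + D * \<tau> * ipv \<Omega> (g\<theta> k) (g\<theta> k)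
          - L * ip \<Omega> (\<lambda>x. u k x - u (k - 1) x) (\<theta> k) = 0"
      by (rule scheme[OF k1 kK H\<theta>])
    have s2: "ip \<Omega> (\<lambda>x. \<theta> k x - \<theta> (k - 1) x) (\<lambda>x. 1) + D * \<tau> * ipv \<Omega> (g\<theta> k) (\<lambda>x. 0)
          - L * ip \<Omega> (\<lambda>x. u k x - u (k - 1) x) (\<lambda>x. 1) = 0"
      by (rule scheme[OF k1 kK H1_const[OF \<Omega>m]])
    have cons: "I\<theta> = L * Iu" using s2 unfolding I\<theta>_def Iu_def by (simp add: ip_def ipv_def)
    have gg: "ipv \<Omega> (g\<theta> k) (g\<theta> k) = (G k)\<^sup>2"
      unfolding G_def nrmv_sq ipv_def by (simp add: power2_norm_eq_inner)
    have e1: "ip \<Omega> (\<lambda>x. \<theta> k x - \<theta> (k - 1) x) (\<theta> k) = P\<theta> + m k * I\<theta>"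
      unfolding P\<theta>_def I\<theta>_def w_def using ip_shift[OF \<Omega>m L\<delta>\<theta> L\<theta>[OF kK], of "m k"] by simp
    have e2: "ip \<Omega> (\<lambda>x. u k x - u (k - 1) x) (\<theta> k) = Pu + m k * Iu"
      unfolding Pu_def Iu_def w_def using ip_shift[OF \<Omega>m L\<delta>u L\<theta>[OF kK], of "m k"] by simp
    have main: "D * \<tau> * (G k)\<^sup>2 = L * Pu - P\<theta>"
      using s1 gg e1 e2 cons by (simp add: algebra_simps)
    have p2: "P\<theta> \<ge> E k / 2 - E (k - 1) / 2"
    proof -
      have "P\<theta> = (\<integral>x. (w k x - w (k - 1) x) * w k x + (m k - m (k - 1)) * w k x \<partial>?M)"
        unfolding P\<theta>_def ip_def w_def by (simp add: algebra_simps)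
      also have "\<dots> = (\<integral>x. (w k x - w (k - 1) x) * w k x \<partial>?M) + (m k - m (k - 1)) * (\<integral>x. w k x \<partial>?M)"
        using L2_prod[OF L2_diff[OF Lw[OF kK] Lw[OF kK']] Lw[OF kK]] L2_int[OF \<Omega>m Lw[OF kK]] by simp
      also have "\<dots> = (\<integral>x. (w k x - w (k - 1) x) * w k x \<partial>?M)" using intw[OF kK] by simp
      also have "\<dots> \<ge> (\<integral>x. (w k x)\<^sup>2 / 2 - (w (k - 1) x)\<^sup>2 / 2 \<partial>?M)"
      proof (rule integral_mono)
        show "integrable ?M (\<lambda>x. (w k x)\<^sup>2 / 2 - (w (k - 1) x)\<^sup>2 / 2)"
          using L2_sq[OF Lw[OF kK]] L2_sq[OF Lw[OF kK']] by auto
        show "integrable ?M (\<lambda>x. (w k x - w (k - 1) x) * w k x)"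
          by (rule L2_prod[OF L2_diff[OF Lw[OF kK] Lw[OF kK']] Lw[OF kK]])
        fix x
        have "0 \<le> (w k x - w (k - 1) x)\<^sup>2 / 2" by simp
        then show "(w k x)\<^sup>2 / 2 - (w (k - 1) x)\<^sup>2 / 2 \<le> (w k x - w (k - 1) x) * w k x"
          by (simp add: power2_eq_square algebra_simps)
      qed
      also have "(\<integral>x. (w k x)\<^sup>2 / 2 - (w (k - 1) x)\<^sup>2 / 2 \<partial>?M) = E k / 2 - E (k - 1) / 2"
        unfolding E_def using L2_sq[OF Lw[OF kK]] L2_sq[OF Lw[OF kK']] by simp
      finally show ?thesis .
    qed
    have p3: "L * Pu \<le> D * \<tau> / 2 * (G k)\<^sup>2 + L\<^sup>2 * c / (2 * (D * \<tau>)) * (dn k)\<^sup>2"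
    proof (cases "Pu = 0")
      case True
      then show ?thesis using Dt c0 by (simp add: add_nonneg_nonneg)
    next
      case False
      have Hw: "H1 \<Omega> (w k) (g\<theta> k)" unfolding w_def by (rule H1_shift[OF \<Omega>m H\<theta>])
      define N where "N = sqrt (\<beta> * (G k)\<^sup>2 + (nrm \<Omega> (w k))\<^sup>2)"
      have db: "\<bar>Pu\<bar> \<le> dn k * N"
        unfolding Pu_def dn_def N_def G_def by (rule dual_bound[OF \<Omega>m beta L\<delta>u Hw])
      have pc: "nrm \<Omega> (w k) \<le> C\<^sub>P * G k"
        using poincare[OF H\<theta>] unfolding w_def m_def G_def by simp
      have G0: "G k \<ge> 0" unfolding G_def by (rule nrmv_nonneg)
      have "(nrm \<Omega> (w k))\<^sup>2 \<le> (C\<^sub>P * G k)\<^sup>2"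
        by (rule power_mono[OF pc nrm_nonneg])
      then have "\<beta> * (G k)\<^sup>2 + (nrm \<Omega> (w k))\<^sup>2 \<le> c * (G k)\<^sup>2"
        unfolding c_def by (simp add: algebra_simps power_mult_distrib)
      then have "N \<le> sqrt (c * (G k)\<^sup>2)" unfolding N_def by (rule real_sqrt_le_mono)
      also have "\<dots> = sqrt c * G k" using G0 by (simp add: real_sqrt_mult)
      finally have NG: "N \<le> sqrt c * G k" .
      have N0: "N \<ge> 0" unfolding N_def using beta by simp
      have dpos: "dn k \<ge> 0"
      proof (rule ccontr)
        assume "\<not> dn k \<ge> 0"
        then have "dn k * N \<le> 0" using N0 by (simp add: mult_nonpos_nonneg)
        then show False using db False by linarith
      qed
      have "L * Pu \<le> \<bar>L\<bar> * \<bar>Pu\<bar>" by (simp add: abs_mult[symmetric])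
      also have "\<dots> \<le> \<bar>L\<bar> * (dn k * N)" by (rule mult_left_mono[OF db]) simp
      also have "\<dots> \<le> \<bar>L\<bar> * (dn k * (sqrt c * G k))"
        by (intro mult_left_mono NG dpos) simp_all
      also have "\<dots> = (\<bar>L\<bar> * dn k * sqrt c) * G k" by (simp add: algebra_simps)
      also have "\<dots> \<le> (D * \<tau>) * (G k)\<^sup>2 / 2 + (\<bar>L\<bar> * dn k * sqrt c)\<^sup>2 / (2 * (D * \<tau>))"
        by (rule young[OF Dt])
      also have "(\<bar>L\<bar> * dn k * sqrt c)\<^sup>2 = L\<^sup>2 * c * (dn k)\<^sup>2"
        using c0 by (simp add: power_mult_distrib)
      finally show ?thesis by (simp add: field_simps)
    qed
    define X where "X = D * \<tau> * (G k)\<^sup>2"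
    have a: "D * \<tau> / 2 * (G k)\<^sup>2 = X / 2" unfolding X_def by simp
    have m': "X = L * Pu - P\<theta>" using main X_def by simp
    define Y where "Y = L\<^sup>2 * c / (2 * (D * \<tau>)) * (dn k)\<^sup>2"
    have p3': "L * Pu \<le> X / 2 + Y" using p3[unfolded a] Y_def by simp
    obtain e1 e2 where e: "e1 = E (k - 1)" "e2 = E k" by blast
    have "X / 2 \<le> Y + (e1 - e2) / 2" using m' p2[unfolded e[symmetric]] p3' by argo
    then show ?thesis unfolding a Y_def e .
  qed
  have "D * \<tau> / 2 * (\<Sum>k = 1..K. (G k)\<^sup>2) = (\<Sum>k = 1..K. D * \<tau> / 2 * (G k)\<^sup>2)"
    by (simp add: sum_distrib_left)
  also have "\<dots> \<le> (\<Sum>k = 1..K. L\<^sup>2 * c / (2 * (D * \<tau>)) * (dn k)\<^sup>2 + (E (k - 1) - E k) / 2)"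
    by (rule sum_mono) (use step in auto)
  also have "\<dots> = L\<^sup>2 * c / (2 * (D * \<tau>)) * (\<Sum>k = 1..K. (dn k)\<^sup>2) + (E 0 - E K) / 2"
    unfolding sum.distrib sum_distrib_left[symmetric] sum_divide_distrib[symmetric] telescope by simp
  finally have fin: "D * \<tau> / 2 * (\<Sum>k = 1..K. (G k)\<^sup>2)
      \<le> L\<^sup>2 * c / (2 * (D * \<tau>)) * (\<Sum>k = 1..K. (dn k)\<^sup>2) + (nrm \<Omega> (\<theta> 0))\<^sup>2 / 2"
    using E0 EK by argo
  define S1 where "S1 = (\<Sum>k = 1..K. (G k)\<^sup>2)"
  define S2 where "S2 = (\<Sum>k = 1..K. (dn k)\<^sup>2)"
  define P where "P = (nrm \<Omega> (\<theta> 0))\<^sup>2"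
  have fin': "D * \<tau> / 2 * S1 \<le> L\<^sup>2 * c / (2 * (D * \<tau>)) * S2 + P / 2"
    using fin S1_def S2_def P_def by simp
  have "\<tau> * S1 = (2 / D) * (D * \<tau> / 2 * S1)" using D by (simp add: field_simps)
  also have "\<dots> \<le> (2 / D) * (L\<^sup>2 * c / (2 * (D * \<tau>)) * S2 + P / 2)"
    by (rule mult_left_mono[OF fin']) (use D in simp)
  also have "\<dots> = P / D + L\<^sup>2 * c / D\<^sup>2 * (1 / \<tau>) * S2"
    using D tau0 by (simp add: field_simps power2_eq_square)
  finally show ?thesis unfolding S1_def S2_def P_def G_def dn_def c_def .
qed

end
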